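(* Let $\mathcal{H}$ be a hypergraph on $V=\{v_1,\dots,v_n\}$. For $i\le n$ let $V_i=\{v_1,\dots,v_i\}$ and $\mathcal{H}_i=(V_i,\{F\cap V_i\mid F\in\mathcal{H}\})$. Let $k<i\le n$ and $E\in\mathrm{ext}_k(\mathcal{H}_i)$. Then $E\setminus\{v_i\}\in\mathrm{ext}_k(\mathcal{H}_{i-1})$.
   Context: For a hypergraph $\mathcal{H}$ on vertex set $W$, a $k$-trace on $W$ is a pair $(T,S)$ with $S\subseteq W$, $|S|=k$, $T\subseteq S$; $F$ realizes it if $F\cap S=T$. $\mathrm{traces}_k(F)$ is the set of $k$-traces on $W$ realized by $F$, and $\mathrm{traces}_k(\mathcal{H})=\bigcup_{F\in\mathcal{H}}\mathrm{traces}_k(F)$. $\mathrm{ext}_k(\mathcal{H})$ is the hypergraph on $W$ whose hyperedges are all $E\subseteq W$ with $\mathrm{traces}_k(E)\subseteq\mathrm{traces}_k(\mathcal{H})$. *)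

theory Defs
  imports Main
begin

definition traces :: "'a set \<Rightarrow> nat \<Rightarrow> 'a set \<Rightarrow> ('a set \<times> 'a set) set" where
  "traces W k F = {(F \<inter> S, S) | S. S \<subseteq> W \<and> finite S \<and> card S = k}"

definition traces_hg :: "'a set \<Rightarrow> nat \<Rightarrow> 'a set set \<Rightarrow> ('a set \<times> 'a set) set" where
  "traces_hg W k H = (\<Union>F\<in>H. traces W k F)"

definition ext :: "'a set \<Rightarrow> nat \<Rightarrow> 'a set set \<Rightarrow> 'a set set" where
  "ext W k H = {E. E \<subseteq> W \<and> traces W k E \<subseteq> traces_hg W k H}"

(* Vertex ordering V = {v_1,...,v_n} given by a distinct list vs, v_j = vs ! (j-1).
   V_i = {v_1,...,v_i}, H_i = {F \<inter> V_i | F \<in> H}. *)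
definition prefix_set :: "'a list \<Rightarrow> nat \<Rightarrow> 'a set" where
  "prefix_set vs i = set (take i vs)"

definition restrict_hg :: "'a list \<Rightarrow> nat \<Rightarrow> 'a set set \<Rightarrow> 'a set set" where
  "restrict_hg vs i H = (\<lambda>F. F \<inter> prefix_set vs i) ` H"

end

theory Submission
  imports Defs
begin

theorem lemma5:
  fixes vs :: "'a list" and H :: "'a set set" and k i :: nat and E :: "'a set"
  assumes "distinct vs"
    and "\<forall>F\<in>H. F \<subseteq> set vs"
    and "k < i" and "i \<le> length vs"
    and "E \<in> ext (prefix_set vs i) k (restrict_hg vs i H)"
  shows "E - {vs ! (i - 1)} \<in> ext (prefix_set vs (i - 1)) k (restrict_hg vs (i - 1) H)"
proof -
  define v where "v = vs ! (i - 1)"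
  have i1: "i = Suc (i - 1)" using assms(3) by simp
  have tk: "take i vs = take (i - 1) vs @ [v]"
    using i1 assms(4) v_def by (metis Suc_le_lessD take_Suc_conv_app_nth)
  have Pi: "prefix_set vs i = insert v (prefix_set vs (i - 1))"
    unfolding prefix_set_def tk by auto
  have vn: "v \<notin> prefix_set vs (i - 1)"
    using assms(1) tk unfolding prefix_set_def
    by (metis distinct_append distinct_take disjoint_iff list.set_intros(1))
  have Esub: "E \<subseteq> prefix_set vs i" and Etr: "traces (prefix_set vs i) k E \<subseteq> traces_hg (prefix_set vs i) k (restrict_hg vs i H)"
    using assms(5) unfolding ext_def by auto
  show ?thesis
    unfolding ext_def v_def[symmetric]
  proof (intro CollectI conjI subsetI)
    fix x assume "x \<in> E - {v}" then show "x \<in> prefix_set vs (i - 1)" using Esub Pi by auto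
  next
    fix t assume "t \<in> traces (prefix_set vs (i - 1)) k (E - {v})"
    then obtain S where t: "t = ((E - {v}) \<inter> S, S)" and S: "S \<subseteq> prefix_set vs (i - 1)" "finite S" "card S = k"
      unfolding traces_def by auto
    have vS: "v \<notin> S" using S vn by auto
    have "(E \<inter> S, S) \<in> traces (prefix_set vs i) k E"
      unfolding traces_def using S Pi by auto
    with Etr obtain F where F: "F \<in> H" "(E \<inter> S, S) \<in> traces (prefix_set vs i) k (F \<inter> prefix_set vs i)"
      unfolding traces_hg_def restrict_hg_def by auto
    then have eq: "E \<inter> S = F \<inter> prefix_set vs i \<inter> S" unfolding traces_def by auto
    have "t = (F \<inter> prefix_set vs (i - 1) \<inter> S, S)"
      using t eq vS S Pi by auto
    then have "t \<in> traces (prefix_set vs (i - 1)) k (F \<inter> prefix_set vs (i - 1))"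
      unfolding traces_def using S by auto
    then show "t \<in> traces_hg (prefix_set vs (i - 1)) k (restrict_hg vs (i - 1) H)"
      unfolding traces_hg_def restrict_hg_def using F(1) by auto
  qed
qed

end
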